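(* Let $\mathcal{W}=(A,\to,\mathbb{S},\mathsf{f}_{\mathtt{NF}},\mathsf{Aggr})$ be a wARS. Then (i) $\mathcal{W}$ is not bounded if $\mathsf{f}_{\mathtt{NF}}(a)=\top$ for some $a\in\mathtt{NF}_\to$; and (ii) $\mathcal{W}$ is bounded if $\mathsf{f}_{\mathtt{NF}}$ is universally bounded and all aggregator functions $\mathsf{Aggr}_{a\to B}$ are selective.
   Context: A semiring $\mathbb{S}=(S,\oplus,\odot,\mathbf{0},\mathbf{1})$: $(S,\oplus,\mathbf{0})$ commutative monoid, $(S,\odot,\mathbf{1})$ monoid, $\odot$ distributes over $\oplus$, $\mathbf{0}$ annihilator. Natural order: $s\preccurlyeq t$ iff $s\oplus u=t$ for some $u$. A complete lattice semiring is one where $\preccurlyeq$ is antisymmetric and every subset $T\subseteq S$ has a least upper bound $\bigsqcup T$; $\top=\bigsqcup S$. Infinite sums/products of a sequence $[s_1,s_2,\dots]$ are the suprema of the finite partial sums/products. $\mathrm{Seq}(X)$: non-empty finite or infinite sequences over $X$. An sARS is $(A,\to)$ with $\to\subseteq A\times\mathrm{Seq}(A)$; $\mathtt{NF}_\to$ is the set of $a$ with no $B$ such that $a\to B$. An $(A,\to)$-reduction tree (RT) is a labeled ordered tree whose nodes $v$ carry labels $a_v\in A$ and whose ordered child sequence $vE$ is either empty or satisfies $a_v\to[a_w\mid w\in vE]$. Aggregators: smallest set containing constants $s\in S$, variables $v_1,v_2,\dots$, and $\bigoplus F$, $\bigodot F$ for non-empty finite or infinite sequences $F$ of aggregators; they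 induce functions $S^n\to S$ by substitution $v_i\mapsto$ $i$-th argument. A wARS $(A,\to,\mathbb{S},\mathsf{f}_{\mathtt{NF}},\mathsf{Aggr})$ consists of an sARS $(A,\to)$, a complete lattice semiring $\mathbb{S}$, a map $\mathsf{f}_{\mathtt{NF}}:\mathtt{NF}_\to\to S$, and for each $a\to B$ an aggregator $\mathsf{Aggr}_{a\to B}$ with variable indices $\le|B|$, viewed as a function $S^{|B|}\to S$. Weight of a finite-depth RT $\mathfrak{T}$ at node $v$: $\mathsf{f}_{\mathtt{NF}}(a_v)$ if $a_v\in\mathtt{NF}_\to$; $\mathbf{0}$ if $v$ is a leaf with $a_v\notin\mathtt{NF}_\to$; $\mathsf{Aggr}_{a_v\to B}[$weights of the children in order$]$ with $B=[a_w\mid w\in vE]$ otherwise; $[\![\mathfrak{T}]\!]$ is the weight at the root. $[\![a]\!]=\bigsqcup\{[\![\mathfrak{T}]\!]\mid\mathfrak{T}$ an RT of finite depth with root labeled $a\}$. The wARS is bounded if $[\![a]\!]\neq\top$ for all $a\in A$. $\mathsf{f}_{\mathtt{NF}}$ is universally bounded if there is $C\in S\setminus\{\top\}$ with $\mathsf{f}_{\mathtt{NF}}(a)\preccurlyeq C$ for all $a\in\mathtt{NF}_\to$. An aggregator function $\mathsf{Aggr}_{a\to B}:S^{|B|}\to S$ is selective if for every argument $[s_1,s_2,\dots]\in S^{|B|}$ there is $1\le i\le|B|$ with $\mathsf{Aggr}_{a\to B}[s_1,s_2,\dots]=s_i$. *)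

theory Defs
  imports Main "HOL-Library.Extended_Nat"
begin

record 's semiring =
  splus  :: "'s \<Rightarrow> 's \<Rightarrow> 's"
  stimes :: "'s \<Rightarrow> 's \<Rightarrow> 's"
  szero  :: 's
  sone   :: 's

definition is_semiring :: "'s semiring \<Rightarrow> bool" where
  "is_semiring S \<longleftrightarrow>
     (\<forall>x y z. splus S (splus S x y) z = splus S x (splus S y z)) \<and>
     (\<forall>x y. splus S x y = splus S y x) \<and>
     (\<forall>x. splus S (szero S) x = x) \<and>
     (\<forall>x y z. stimes S (stimes S x y) z = stimes S x (stimes S y z)) \<and>
     (\<forall>x. stimes S (sone S) x = x \<and> stimes S x (sone S) = x) \<and>
     (\<forall>x y z. stimes S x (splus S y z) = splus S (stimes S x y) (stimes S x z)) \<and>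
     (\<forall>x y z. stimes S (splus S y z) x = splus S (stimes S y x) (stimes S z x)) \<and>
     (\<forall>x. stimes S (szero S) x = szero S \<and> stimes S x (szero S) = szero S)"

definition nat_le :: "'s semiring \<Rightarrow> 's \<Rightarrow> 's \<Rightarrow> bool" where
  "nat_le S s t \<longleftrightarrow> (\<exists>u. splus S s u = t)"

definition is_lub :: "'s semiring \<Rightarrow> 's set \<Rightarrow> 's \<Rightarrow> bool" where
  "is_lub S T x \<longleftrightarrow> (\<forall>t\<in>T. nat_le S t x) \<and> (\<forall>y. (\<forall>t\<in>T. nat_le S t y) \<longrightarrow> nat_le S x y)"

definition Lub :: "'s semiring \<Rightarrow> 's set \<Rightarrow> 's" where
  "Lub S T = (THE x. is_lub S T x)"

definition complete_lattice_semiring :: "'s semiring \<Rightarrow> bool" where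
  "complete_lattice_semiring S \<longleftrightarrow> is_semiring S \<and>
     (\<forall>s t. nat_le S s t \<and> nat_le S t s \<longrightarrow> s = t) \<and>
     (\<forall>T. \<exists>x. is_lub S T x)"

definition stop :: "'s semiring \<Rightarrow> 's" where
  "stop S = Lub S UNIV"

text \<open>Fin x xs is the finite sequence x # xs; Inf f is the infinite sequence f 0, f 1, ...\<close>
datatype 'x seq = Fin 'x "'x list" | Inf "nat \<Rightarrow> 'x"

fun seq_len :: "'x seq \<Rightarrow> enat" where
  "seq_len (Fin x xs) = enat (Suc (length xs))"
| "seq_len (Inf f) = \<infinity>"

text \<open>0-based access\<close>
fun seq_nth :: "'x seq \<Rightarrow> nat \<Rightarrow> 'x" where
  "seq_nth (Fin x xs) i = (x # xs) ! i"
| "seq_nth (Inf f) i = f i"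

fun sum_list_S :: "'s semiring \<Rightarrow> 's list \<Rightarrow> 's" where
  "sum_list_S S [] = szero S"
| "sum_list_S S (x # xs) = splus S x (sum_list_S S xs)"

fun prod_list_S :: "'s semiring \<Rightarrow> 's list \<Rightarrow> 's" where
  "prod_list_S S [] = sone S"
| "prod_list_S S (x # xs) = stimes S x (prod_list_S S xs)"

fun seq_sum :: "'s semiring \<Rightarrow> 's seq \<Rightarrow> 's" where
  "seq_sum S (Fin x xs) = sum_list_S S (x # xs)"
| "seq_sum S (Inf f) = Lub S {sum_list_S S (map f [0..<n]) | n. 1 \<le> n}"

fun seq_prod :: "'s semiring \<Rightarrow> 's seq \<Rightarrow> 's" where
  "seq_prod S (Fin x xs) = prod_list_S S (x # xs)"
| "seq_prod S (Inf f) = Lub S {prod_list_S S (map f [0..<n]) | n. 1 \<le> n}"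

text \<open>AVar i is the variable v_i (indices start at 1).\<close>
datatype 's aggr = AConst 's | AVar nat | APlus "'s aggr seq" | ATimes "'s aggr seq"

primrec aggr_vars :: "'s aggr \<Rightarrow> nat set" where
  "aggr_vars (AConst s) = {}"
| "aggr_vars (AVar i) = {i}"
| "aggr_vars (APlus F) = \<Union> (set_seq (map_seq aggr_vars F))"
| "aggr_vars (ATimes F) = \<Union> (set_seq (map_seq aggr_vars F))"

primrec aggr_eval :: "'s semiring \<Rightarrow> 's seq \<Rightarrow> 's aggr \<Rightarrow> 's" where
  "aggr_eval S args (AConst s) = s"
| "aggr_eval S args (AVar i) = seq_nth args (i - 1)"
| "aggr_eval S args (APlus F) = seq_sum S (map_seq (aggr_eval S args) F)"
| "aggr_eval S args (ATimes F) = seq_prod S (map_seq (aggr_eval S args) F)"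

definition NF :: "('a \<Rightarrow> 'a seq \<Rightarrow> bool) \<Rightarrow> 'a set" where
  "NF step = {a. \<not> (\<exists>B. step a B)}"

definition is_wARS ::
  "('a \<Rightarrow> 'a seq \<Rightarrow> bool) \<Rightarrow> 's semiring \<Rightarrow> ('a \<Rightarrow> 's) \<Rightarrow> ('a \<Rightarrow> 'a seq \<Rightarrow> 's aggr) \<Rightarrow> bool" where
  "is_wARS step S fNF Aggr \<longleftrightarrow> complete_lattice_semiring S \<and>
     (\<forall>a B. step a B \<longrightarrow> (\<forall>i\<in>aggr_vars (Aggr a B). 1 \<le> i \<and> enat i \<le> seq_len B))"

text \<open>The datatype only contains well-founded trees;
  finite depth is imposed separately.\<close>
datatype 'a tree = Leaf 'a | Node 'a "'a tree seq"

primrec root :: "'a tree \<Rightarrow> 'a" where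
  "root (Leaf a) = a"
| "root (Node a F) = a"

inductive is_RT :: "('a \<Rightarrow> 'a seq \<Rightarrow> bool) \<Rightarrow> 'a tree \<Rightarrow> bool" for step where
  "is_RT step (Leaf a)"
| "step a (map_seq root F) \<Longrightarrow> (\<forall>t\<in>set_seq F. is_RT step t) \<Longrightarrow> is_RT step (Node a F)"

inductive depth_le :: "nat \<Rightarrow> 'a tree \<Rightarrow> bool" where
  "depth_le n (Leaf a)"
| "(\<forall>t\<in>set_seq F. depth_le n t) \<Longrightarrow> depth_le (Suc n) (Node a F)"

definition finite_depth :: "'a tree \<Rightarrow> bool" where
  "finite_depth t \<longleftrightarrow> (\<exists>n. depth_le n t)"

primrec tree_weight ::
  "('a \<Rightarrow> 'a seq \<Rightarrow> bool) \<Rightarrow> 's semiring \<Rightarrow> ('a \<Rightarrow> 's) \<Rightarrow> ('a \<Rightarrow> 'a seq \<Rightarrow> 's aggr) \<Rightarrow> 'a tree \<Rightarrow> 's" where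
  "tree_weight step S fNF Aggr (Leaf a) = (if a \<in> NF step then fNF a else szero S)"
| "tree_weight step S fNF Aggr (Node a F) =
     (if a \<in> NF step then fNF a
      else aggr_eval S (map_seq (tree_weight step S fNF Aggr) F) (Aggr a (map_seq root F)))"

definition weight ::
  "('a \<Rightarrow> 'a seq \<Rightarrow> bool) \<Rightarrow> 's semiring \<Rightarrow> ('a \<Rightarrow> 's) \<Rightarrow> ('a \<Rightarrow> 'a seq \<Rightarrow> 's aggr) \<Rightarrow> 'a \<Rightarrow> 's" where
  "weight step S fNF Aggr a = Lub S {tree_weight step S fNF Aggr t | t.
      is_RT step t \<and> finite_depth t \<and> root t = a}"

definition bounded ::
  "('a \<Rightarrow> 'a seq \<Rightarrow> bool) \<Rightarrow> 's semiring \<Rightarrow> ('a \<Rightarrow> 's) \<Rightarrow> ('a \<Rightarrow> 'a seq \<Rightarrow> 's aggr) \<Rightarrow> bool" where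
  "bounded step S fNF Aggr \<longleftrightarrow> (\<forall>a. weight step S fNF Aggr a \<noteq> stop S)"

definition universally_bounded ::
  "('a \<Rightarrow> 'a seq \<Rightarrow> bool) \<Rightarrow> 's semiring \<Rightarrow> ('a \<Rightarrow> 's) \<Rightarrow> bool" where
  "universally_bounded step S fNF \<longleftrightarrow>
     (\<exists>C. C \<noteq> stop S \<and> (\<forall>a\<in>NF step. nat_le S (fNF a) C))"

definition selective :: "'s semiring \<Rightarrow> 'b seq \<Rightarrow> 's aggr \<Rightarrow> bool" where
  "selective S B g \<longleftrightarrow>
     (\<forall>args. seq_len args = seq_len B \<longrightarrow>
        (\<exists>i. 1 \<le> i \<and> enat i \<le> seq_len B \<and> aggr_eval S args g = seq_nth args (i - 1)))"

end

theory Submission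
  imports Defs
begin

lemma lub_is:
  assumes "complete_lattice_semiring S"
  shows "is_lub S T (Lub S T)"
proof -
  obtain x where x: "is_lub S T x" using assms unfolding complete_lattice_semiring_def by blast
  have anti: "\<And>s t. nat_le S s t \<Longrightarrow> nat_le S t s \<Longrightarrow> s = t"
    using assms unfolding complete_lattice_semiring_def by blast
  have "\<And>y. is_lub S T y \<Longrightarrow> y = x"
  proof -
    fix y assume y: "is_lub S T y"
    have "nat_le S x y" using x y unfolding is_lub_def by blast
    moreover have "nat_le S y x" using x y unfolding is_lub_def by blast
    ultimately show "y = x" using anti by blast
  qed
  then have "\<exists>!x. is_lub S T x" using x by blast
  then show ?thesis unfolding Lub_def by (rule theI')
qed

lemma seq_nth_in:
  assumes "1 \<le> i" "enat i \<le> seq_len s"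
  shows "seq_nth s (i - 1) \<in> set_seq s"
  using assms
  by (cases s) (auto simp: nth_Cons split: nat.splits)

lemma seq_len_map: "seq_len (map_seq f s) = seq_len s"
  by (cases s) auto

lemma weight_bound:
  assumes sel: "\<forall>a B. step a B \<longrightarrow> selective S B (Aggr a B)"
  shows "is_RT step t \<Longrightarrow> tree_weight step S fNF Aggr t \<in> fNF ` NF step \<union> {szero S}"
proof (induction t)
  case (Leaf a)
  then show ?case by auto
next
  case (Node a F)
  show ?case
  proof (cases "a \<in> NF step")
    case True
    then show ?thesis by auto
  next
    case False
    from Node.prems have st: "step a (map_seq root F)" and sub: "\<forall>t\<in>set_seq F. is_RT step t"
      by (auto elim: is_RT.cases)
    from sel st have "selective S (map_seq root F) (Aggr a (map_seq root F))" by blast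
    then obtain i where i: "1 \<le> i" "enat i \<le> seq_len (map_seq root F)"
      "aggr_eval S (map_seq (tree_weight step S fNF Aggr) F) (Aggr a (map_seq root F))
        = seq_nth (map_seq (tree_weight step S fNF Aggr) F) (i - 1)"
      unfolding selective_def
      using spec[of _ "map_seq (tree_weight step S fNF Aggr) F"] seq_len_map[of _ F] by (metis (no_types, lifting))
    have "seq_nth (map_seq (tree_weight step S fNF Aggr) F) (i - 1)
       \<in> set_seq (map_seq (tree_weight step S fNF Aggr) F)"
      using i by (intro seq_nth_in) (simp_all add: seq_len_map)
    then obtain t where "t \<in> set_seq F"
      "seq_nth (map_seq (tree_weight step S fNF Aggr) F) (i - 1) = tree_weight step S fNF Aggr t"
      by (auto simp: seq.set_map)
    with Node.IH sub False i(3) show ?thesis by auto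
  qed
qed

theorem theorem25:
  fixes step :: "'a \<Rightarrow> 'a seq \<Rightarrow> bool"
    and S :: "'s semiring"
    and fNF :: "'a \<Rightarrow> 's"
    and Aggr :: "'a \<Rightarrow> 'a seq \<Rightarrow> 's aggr"
  assumes "is_wARS step S fNF Aggr"
  shows "((\<exists>a\<in>NF step. fNF a = stop S) \<longrightarrow> \<not> bounded step S fNF Aggr)
       \<and> ((universally_bounded step S fNF \<and> (\<forall>a B. step a B \<longrightarrow> selective S B (Aggr a B)))
            \<longrightarrow> bounded step S fNF Aggr)"
proof
  have cl: "complete_lattice_semiring S" using assms unfolding is_wARS_def by blast
  have anti: "\<And>s t. nat_le S s t \<Longrightarrow> nat_le S t s \<Longrightarrow> s = t"
    using cl unfolding complete_lattice_semiring_def by blast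
  have topu: "\<And>x. nat_le S x (stop S)"
    using lub_is[OF cl, of UNIV] unfolding stop_def is_lub_def by blast
  show "(\<exists>a\<in>NF step. fNF a = stop S) \<longrightarrow> \<not> bounded step S fNF Aggr"
  proof
    assume "\<exists>a\<in>NF step. fNF a = stop S"
    then obtain a where a: "a \<in> NF step" "fNF a = stop S" by blast
    have "is_RT step (Leaf a)" by (rule is_RT.intros)
    moreover have "finite_depth (Leaf a)" unfolding finite_depth_def by (blast intro: depth_le.intros)
    ultimately have "stop S \<in> {tree_weight step S fNF Aggr t | t.
      is_RT step t \<and> finite_depth t \<and> root t = a}" using a
      by (intro CollectI exI[of _ "Leaf a"]) simp
    then have "nat_le S (stop S) (weight step S fNF Aggr a)"
      using lub_is[OF cl, of "{tree_weight step S fNF Aggr t | t.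
      is_RT step t \<and> finite_depth t \<and> root t = a}"] unfolding weight_def is_lub_def by blast
    then have "weight step S fNF Aggr a = stop S" using anti[OF topu] by blast
    then show "\<not> bounded step S fNF Aggr" unfolding bounded_def by blast
  qed
  show "(universally_bounded step S fNF \<and> (\<forall>a B. step a B \<longrightarrow> selective S B (Aggr a B)))
            \<longrightarrow> bounded step S fNF Aggr"
  proof
    assume h: "universally_bounded step S fNF \<and> (\<forall>a B. step a B \<longrightarrow> selective S B (Aggr a B))"
    then obtain C where C: "C \<noteq> stop S" "\<forall>a\<in>NF step. nat_le S (fNF a) C"
      unfolding universally_bounded_def by blast
    have "splus S (szero S) C = C" using cl unfolding complete_lattice_semiring_def is_semiring_def
      by blast
    then have z: "nat_le S (szero S) C" unfolding nat_le_def by blast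
    show "bounded step S fNF Aggr" unfolding bounded_def
    proof
      fix a
      have "\<forall>w\<in>{tree_weight step S fNF Aggr t | t. is_RT step t \<and> finite_depth t \<and> root t = a}.
          nat_le S w C"
      proof
        fix w assume "w \<in> {tree_weight step S fNF Aggr t | t. is_RT step t \<and> finite_depth t \<and> root t = a}"
        then obtain t where t: "is_RT step t" "w = tree_weight step S fNF Aggr t" by blast
        have "w \<in> fNF ` NF step \<union> {szero S}" using weight_bound[of step S Aggr, OF _ t(1)] h t(2) by blast
        then show "nat_le S w C" using C(2) z by blast
      qed
      then have "nat_le S (weight step S fNF Aggr a) C"
        using lub_is[OF cl, of "{tree_weight step S fNF Aggr t | t.
      is_RT step t \<and> finite_depth t \<and> root t = a}"] unfolding weight_def is_lub_def by blast
      then show "weight step S fNF Aggr a \<noteq> stop S" using anti[OF topu[of C]] C(1) by metis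
    qed
  qed
qed

end
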